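(* For $\mathfrak{g}=sl(n)$ with $G=GL(n)$, the Belavin–Drinfeld cohomology $H^1_{BD}(r_{DJ})$ associated to the Drinfeld–Jimbo $r$-matrix is trivial, i.e. every cocycle $X\in GL(n,\overline{\mathbb{K}})$ with $X^{-1}\sigma(X)\in C(r_{DJ})$ for all $\sigma\in\mathrm{Gal}(\overline{\mathbb{K}}/\mathbb{K})$ is of the form $X=QC$ with $Q\in GL(n,\mathbb{K})$ and $C\in C(r_{DJ})$.
   Context: $\mathbb{K}=\mathbb{C}((\hbar))$, $\overline{\mathbb{K}}$ its algebraic closure, Galois group acting entrywise. $GL(n)$ acts on $sl(n)$ by $\mathrm{Ad}_X(a)=XaX^{-1}$. $e_{ik}$ are matrix units, $\Omega=\sum_{i,k}e_{ik}\otimes e_{ki}-\frac1n I\otimes I$, $\Omega_0=\sum_i e_{ii}\otimes e_{ii}-\frac1nI\otimes I$ its Cartan part. The Drinfeld–Jimbo $r$-matrix is $r_{DJ}=\sum_{i<k}e_{ik}\otimes e_{ki}+\frac12\Omega_0$. $C(r)=\{X\in GL(n,\overline{\mathbb{K}}):(\mathrm{Ad}_X\otimes\mathrm{Ad}_X)(r)=r\}$. A cocycle associated to $r$ is $X\in GL(n,\overline{\mathbb{K}})$ with $X^{-1}\sigma(X)\in C(r)$ for all $\sigma$; cocycles $X_1,X_2$ are equivalent if $X_1=QX_2C$ with $Q\in GL(n,\mathbb{K})$, $C\in C(r)$; $H^1_{BD}(r)$ is the set of classes, called trivial if every cocycle is equivalent to the identity. *)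

theory Defs
  imports "HOL-Computational_Algebra.Formal_Laurent_Series"
          "HOL-Computational_Algebra.Polynomial"
          "Jordan_Normal_Form.Gauss_Jordan_Elimination"
begin

text \<open>The base field K = C((hbar)) is the type complex fls. An algebraic closure of K is
  modelled as a field type 'a together with an embedding emb of K into 'a such that 'a is
  algebraically closed and algebraic over the image of emb.\<close>

definition is_field_hom :: "('b::field \<Rightarrow> 'a::field) \<Rightarrow> bool" where
  "is_field_hom f \<longleftrightarrow> f 1 = 1 \<and> (\<forall>x y. f (x + y) = f x + f y) \<and> (\<forall>x y. f (x * y) = f x * f y)"

definition is_alg_closure_of_K :: "(complex fls \<Rightarrow> 'a::field) \<Rightarrow> bool" where
  "is_alg_closure_of_K emb \<longleftrightarrow>
     is_field_hom emb \<and>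
     (\<forall>p :: 'a poly. degree p > 0 \<longrightarrow> (\<exists>x. poly p x = 0)) \<and>
     (\<forall>x :: 'a. \<exists>p :: complex fls poly. p \<noteq> 0 \<and> poly (map_poly emb p) x = 0)"

definition galois_group :: "(complex fls \<Rightarrow> 'a::field) \<Rightarrow> ('a \<Rightarrow> 'a) set" where
  "galois_group emb = {\<sigma>. bij \<sigma> \<and> is_field_hom \<sigma> \<and> (\<forall>c. \<sigma> (emb c) = emb c)}"

definition minv :: "'a::field mat \<Rightarrow> 'a mat" where
  "minv X = the (mat_inverse X)"

text \<open>An element of sl(n) tensor sl(n) (inside M_n tensor M_n) is represented by its coefficient
  tensor: r i j k l is the coefficient of e_ij tensor e_kl.\<close>

text \<open>Drinfeld-Jimbo r-matrix: sum over i<k of e_ik tensor e_ki plus (1/2) Omega_0, where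
  Omega_0 = sum_i e_ii tensor e_ii - (1/n) I tensor I and I tensor I = sum_{i,k} e_ii tensor e_kk.\<close>
definition r_DJ :: "nat \<Rightarrow> nat \<Rightarrow> nat \<Rightarrow> nat \<Rightarrow> nat \<Rightarrow> 'a::field" where
  "r_DJ n a b c d =
     (if a < b \<and> c = b \<and> d = a then 1 else 0)
     + (1/2) * ((if a = b \<and> c = d \<and> a = c then 1 else 0)
                - (if a = b \<and> c = d then 1 / of_nat n else 0))"

text \<open>(Ad_X tensor Ad_X)(r), where Ad_X(e_ij) = X e_ij X^{-1}, in coefficient form.\<close>
definition Ad_tensor :: "nat \<Rightarrow> 'a::field mat \<Rightarrow> (nat \<Rightarrow> nat \<Rightarrow> nat \<Rightarrow> nat \<Rightarrow> 'a)
                         \<Rightarrow> nat \<Rightarrow> nat \<Rightarrow> nat \<Rightarrow> nat \<Rightarrow> 'a" where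
  "Ad_tensor n X r a b c d =
     (\<Sum>i<n. \<Sum>j<n. \<Sum>k<n. \<Sum>l<n.
        X $$ (a, i) * minv X $$ (j, b) * X $$ (c, k) * minv X $$ (l, d) * r i j k l)"

definition centralizer :: "nat \<Rightarrow> (nat \<Rightarrow> nat \<Rightarrow> nat \<Rightarrow> nat \<Rightarrow> 'a::field) \<Rightarrow> 'a mat set" where
  "centralizer n r = {X \<in> carrier_mat n n. invertible_mat X \<and>
      (\<forall>a<n. \<forall>b<n. \<forall>c<n. \<forall>d<n. Ad_tensor n X r a b c d = r a b c d)}"

definition is_cocycle :: "(complex fls \<Rightarrow> 'a::field) \<Rightarrow> nat \<Rightarrow> (nat \<Rightarrow> nat \<Rightarrow> nat \<Rightarrow> nat \<Rightarrow> 'a)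
                          \<Rightarrow> 'a mat \<Rightarrow> bool" where
  "is_cocycle emb n r X \<longleftrightarrow> X \<in> carrier_mat n n \<and> invertible_mat X \<and>
     (\<forall>\<sigma> \<in> galois_group emb. minv X * map_mat \<sigma> X \<in> centralizer n r)"

definition GL_K :: "(complex fls \<Rightarrow> 'a::field) \<Rightarrow> nat \<Rightarrow> 'a mat set" where
  "GL_K emb n = {Q \<in> carrier_mat n n. invertible_mat Q \<and>
      (\<forall>i<n. \<forall>j<n. Q $$ (i, j) \<in> range emb)}"

end

theory Submission
  imports Defs "Jordan_Normal_Form.Determinant"
begin



lemma fh_add: "is_field_hom f \<Longrightarrow> f (x + y) = f x + f y" unfolding is_field_hom_def by blast
lemma fh_mult: "is_field_hom f \<Longrightarrow> f (x * y) = f x * f y" unfolding is_field_hom_def by blast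
lemma fh_1: "is_field_hom f \<Longrightarrow> f 1 = 1" unfolding is_field_hom_def by blast
lemma fh_0: "is_field_hom f \<Longrightarrow> f 0 = 0"
proof -
  assume h: "is_field_hom f"
  have "f 0 = f 0 + f 0" using fh_add[OF h, of 0 0] by simp
  thus ?thesis by (metis add_cancel_left_right)
qed
lemma fh_neg: "is_field_hom f \<Longrightarrow> f (- x) = - f x"
proof -
  assume h: "is_field_hom f"
  have "f (x + - x) = f x + f (-x)" using fh_add[OF h] .
  thus ?thesis using fh_0[OF h] by (simp add: eq_neg_iff_add_eq_0 add.commute)
qed
lemma fh_diff: "is_field_hom f \<Longrightarrow> f (x - y) = f x - f y"
  using fh_add[of f x "-y"] fh_neg[of f y] by simp
lemma fh_inverse: "is_field_hom f \<Longrightarrow> f (inverse x) = inverse (f x)"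
proof (cases "x = 0")
  case True
  assume h: "is_field_hom f" thus ?thesis using True fh_0[OF h] by simp
next
  case False
  assume h: "is_field_hom f"
  have "f (x * inverse x) = 1" using False fh_1[OF h] by simp
  hence "f x * f (inverse x) = 1" using fh_mult[OF h] by simp
  thus ?thesis by (metis inverse_unique)
qed
lemma fh_divide: "is_field_hom f \<Longrightarrow> f (x / y) = f x / f y"
  by (simp add: divide_inverse fh_mult fh_inverse)
lemma fh_zero_iff: "is_field_hom f \<Longrightarrow> f x = 0 \<longleftrightarrow> x = 0"
proof
  assume h: "is_field_hom f" and "f x = 0"
  show "x = 0"
  proof (rule ccontr)
    assume "x \<noteq> 0"
    hence "f (x * inverse x) = 1" using fh_1[OF h] by simp
    thus False using fh_mult[OF h] \<open>f x = 0\<close> by simp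
  qed
next
  assume "is_field_hom f" "x = 0" thus "f x = 0" using fh_0 by simp
qed
lemma fh_inj: "is_field_hom f \<Longrightarrow> inj f"
proof (rule injI)
  fix x y assume h: "is_field_hom f" and "f x = f y"
  hence "f (x - y) = 0" using fh_diff[OF h] by simp
  thus "x = y" using fh_zero_iff[OF h] by simp
qed
lemma fh_of_nat: "is_field_hom f \<Longrightarrow> f (of_nat k) = of_nat k"
  by (induction k) (simp_all add: fh_0 fh_1 fh_add)

definition inS :: "'a set \<Rightarrow> 'a::zero poly \<Rightarrow> bool" where
  "inS S p \<longleftrightarrow> (\<forall>i. coeff p i \<in> S)"

locale acl =
  fixes emb :: "complex fls \<Rightarrow> 'a::field"
  assumes acl: "is_alg_closure_of_K emb"
begin

lemma emb_hom: "is_field_hom emb" using acl unfolding is_alg_closure_of_K_def by blast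
lemma alg_closed: "degree (p::'a poly) > 0 \<Longrightarrow> \<exists>x. poly p x = 0"
  using acl unfolding is_alg_closure_of_K_def by blast
lemma algebraic: "\<exists>p. p \<noteq> 0 \<and> poly (map_poly emb p) x = 0"
  using acl unfolding is_alg_closure_of_K_def by blast

lemma emb_0[simp]: "emb 0 = 0" using fh_0[OF emb_hom] .
lemma emb_1[simp]: "emb 1 = 1" using fh_1[OF emb_hom] .

definition subr :: "'a set \<Rightarrow> bool" where
  "subr S \<longleftrightarrow> range emb \<subseteq> S \<and> (\<forall>a\<in>S. \<forall>b\<in>S. a + b \<in> S \<and> a * b \<in> S) \<and> (\<forall>a\<in>S. - a \<in> S)"

definition homon :: "'a set \<Rightarrow> ('a \<Rightarrow> 'a) \<Rightarrow> bool" where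
  "homon S f \<longleftrightarrow> (\<forall>c. f (emb c) = emb c) \<and> (\<forall>a\<in>S. \<forall>b\<in>S. f (a + b) = f a + f b \<and> f (a * b) = f a * f b)"

lemma subr_emb: "subr S \<Longrightarrow> emb c \<in> S" unfolding subr_def by blast
lemma subr_0: "subr S \<Longrightarrow> 0 \<in> S" using subr_emb[of S 0] by simp
lemma subr_1: "subr S \<Longrightarrow> 1 \<in> S" using subr_emb[of S 1] by simp
lemma subr_add: "subr S \<Longrightarrow> a \<in> S \<Longrightarrow> b \<in> S \<Longrightarrow> a + b \<in> S" unfolding subr_def by blast
lemma subr_mult: "subr S \<Longrightarrow> a \<in> S \<Longrightarrow> b \<in> S \<Longrightarrow> a * b \<in> S" unfolding subr_def by blast
lemma subr_neg: "subr S \<Longrightarrow> a \<in> S \<Longrightarrow> - a \<in> S" unfolding subr_def by blast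
lemma subr_diff: "subr S \<Longrightarrow> a \<in> S \<Longrightarrow> b \<in> S \<Longrightarrow> a - b \<in> S"
  using subr_add[of S a "-b"] subr_neg[of S b] by simp
lemma subr_sum: "subr S \<Longrightarrow> (\<And>i. i \<in> A \<Longrightarrow> g i \<in> S) \<Longrightarrow> sum g A \<in> S"
  by (induction A rule: infinite_finite_induct) (auto simp: subr_0 subr_add)
lemma subr_power: "subr S \<Longrightarrow> a \<in> S \<Longrightarrow> a ^ k \<in> S"
  by (induction k) (auto simp: subr_1 subr_mult)

lemma inS_pCons: "inS S (pCons c p) \<longleftrightarrow> c \<in> S \<and> inS S p"
  unfolding inS_def by (metis coeff_pCons_0 coeff_pCons_Suc not0_implies_Suc)

lemma subr_poly: "subr S \<Longrightarrow> inS S p \<Longrightarrow> a \<in> S \<Longrightarrow> poly p a \<in> S"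
proof (induction p rule: pCons_induct)
  case 0 thus ?case by (simp add: subr_0)
next
  case (pCons c p) thus ?case by (auto simp: inS_pCons subr_add subr_mult)
qed

lemma homon_0: "homon S f \<Longrightarrow> f 0 = 0" unfolding homon_def by (metis emb_0)
lemma homon_1: "homon S f \<Longrightarrow> f 1 = 1" unfolding homon_def by (metis emb_1)
lemma homon_add: "homon S f \<Longrightarrow> a \<in> S \<Longrightarrow> b \<in> S \<Longrightarrow> f (a + b) = f a + f b" unfolding homon_def by blast
lemma homon_mult: "homon S f \<Longrightarrow> a \<in> S \<Longrightarrow> b \<in> S \<Longrightarrow> f (a * b) = f a * f b" unfolding homon_def by blast
lemma homon_neg: "homon S f \<Longrightarrow> subr S \<Longrightarrow> a \<in> S \<Longrightarrow> f (- a) = - f a"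
proof -
  assume h: "homon S f" "subr S" "a \<in> S"
  have "f (a + - a) = f a + f (- a)" using homon_add[OF h(1) h(3)] subr_neg[OF h(2,3)] by blast
  thus ?thesis using homon_0[OF h(1)] by (simp add: eq_neg_iff_add_eq_0 add.commute)
qed
lemma homon_diff: "homon S f \<Longrightarrow> subr S \<Longrightarrow> a \<in> S \<Longrightarrow> b \<in> S \<Longrightarrow> f (a - b) = f a - f b"
  using homon_add[of S f a "-b"] homon_neg[of S f b] subr_neg[of S b] by simp
lemma homon_sum: "homon S f \<Longrightarrow> subr S \<Longrightarrow> (\<And>i. i \<in> A \<Longrightarrow> g i \<in> S) \<Longrightarrow> f (sum g A) = (\<Sum>i\<in>A. f (g i))"
proof (induction A rule: infinite_finite_induct)
  case (infinite A) thus ?case using homon_0 by simp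
next
  case empty thus ?case using homon_0 by simp
next
  case (insert x F)
  have "f (sum g (insert x F)) = f (g x + sum g F)" using insert by simp
  also have "\<dots> = f (g x) + f (sum g F)"
    using insert by (intro homon_add) (auto intro: subr_sum)
  finally show ?case using insert by simp
qed

lemma homon_poly: "homon S f \<Longrightarrow> subr S \<Longrightarrow> inS S p \<Longrightarrow> a \<in> S \<Longrightarrow> f (poly p a) = poly (map_poly f p) (f a)"
proof (induction p rule: pCons_induct)
  case 0 thus ?case by (simp add: homon_0)
next
  case (pCons c p)
  hence c: "c \<in> S" and p: "inS S p" by (auto simp: inS_pCons)
  have "f (poly (pCons c p) a) = f (c + a * poly p a)" by simp
  also have "\<dots> = f c + f a * f (poly p a)"
    using pCons c p by (simp add: homon_add homon_mult subr_mult subr_poly)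
  also have "\<dots> = poly (map_poly f (pCons c p)) (f a)"
    using pCons p by (simp add: map_poly_pCons homon_0)
  finally show ?case .
qed


lemma inS_0: "subr S \<Longrightarrow> inS S 0" unfolding inS_def by (simp add: subr_0)
lemma inS_const: "subr S \<Longrightarrow> a \<in> S \<Longrightarrow> inS S [:a:]" unfolding inS_def by (simp add: subr_0 coeff_pCons split: nat.split)
lemma inS_X: "subr S \<Longrightarrow> inS S [:0,1:]" unfolding inS_def by (simp add: subr_0 subr_1 coeff_pCons split: nat.split)
lemma inS_add: "subr S \<Longrightarrow> inS S p \<Longrightarrow> inS S q \<Longrightarrow> inS S (p + q)" unfolding inS_def by (simp add: subr_add)
lemma inS_diff: "subr S \<Longrightarrow> inS S p \<Longrightarrow> inS S q \<Longrightarrow> inS S (p - q)" unfolding inS_def by (simp add: subr_diff)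
lemma inS_neg: "subr S \<Longrightarrow> inS S p \<Longrightarrow> inS S (- p)" unfolding inS_def by (simp add: subr_neg)
lemma inS_mult: "subr S \<Longrightarrow> inS S p \<Longrightarrow> inS S q \<Longrightarrow> inS S (p * q)"
  unfolding inS_def by (simp add: coeff_mult subr_sum subr_mult)
lemma inS_smult: "subr S \<Longrightarrow> c \<in> S \<Longrightarrow> inS S p \<Longrightarrow> inS S (Polynomial.smult c p)" unfolding inS_def by (simp add: subr_mult)
lemma inS_monom: "subr S \<Longrightarrow> c \<in> S \<Longrightarrow> inS S (monom c k)" unfolding inS_def by (simp add: subr_0 coeff_monom)
lemma inS_emb: "subr S \<Longrightarrow> inS S (map_poly emb p)" unfolding inS_def by (simp add: coeff_map_poly subr_emb)

lemma map_poly_emb_nz: "p \<noteq> 0 \<Longrightarrow> map_poly emb p \<noteq> 0"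
proof -
  assume "p \<noteq> 0"
  hence "emb (lead_coeff p) \<noteq> 0" using fh_zero_iff[OF emb_hom] by simp
  hence "coeff (map_poly emb p) (degree p) \<noteq> 0" by (simp add: coeff_map_poly)
  thus ?thesis by auto
qed

lemma subr_inverse: assumes S: "subr S" and a: "a \<in> S" shows "inverse a \<in> S"
proof (cases "a = 0")
  case True thus ?thesis using subr_0[OF S] by simp
next
  case anz: False
  have "\<forall>p. p \<noteq> 0 \<longrightarrow> poly (map_poly emb p) a = 0 \<longrightarrow> inverse a \<in> S"
  proof
    fix p show "p \<noteq> 0 \<longrightarrow> poly (map_poly emb p) a = 0 \<longrightarrow> inverse a \<in> S"
    proof (induction p rule: pCons_induct)
      case 0 thus ?case by simp
    next
      case (pCons c p)
      show ?case
      proof (intro impI)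
        assume nz: "pCons c p \<noteq> 0" and r: "poly (map_poly emb (pCons c p)) a = 0"
        hence r': "emb c + a * poly (map_poly emb p) a = 0" by (simp add: map_poly_pCons)
        show "inverse a \<in> S"
        proof (cases "c = 0")
          case True
          hence "p \<noteq> 0" using nz by simp
          moreover have "poly (map_poly emb p) a = 0" using r' True anz by simp
          ultimately show ?thesis using pCons.IH by blast
        next
          case False
          hence ec: "emb c \<noteq> 0" using fh_zero_iff[OF emb_hom] by simp
          have "inverse a = - poly (map_poly emb p) a * emb (inverse c)"
          proof -
            have "a * poly (map_poly emb p) a = - emb c" using r' by (simp add: eq_neg_iff_add_eq_0 add.commute)
            hence "a * (- poly (map_poly emb p) a * emb (inverse c)) = emb c * emb (inverse c)"
            proof -
              assume eq: "a * poly (map_poly emb p) a = - emb c"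
              have "a * (- poly (map_poly emb p) a * emb (inverse c)) = - (a * poly (map_poly emb p) a) * emb (inverse c)"
                by (simp add: algebra_simps)
              thus ?thesis using eq by simp
            qed
            also have "\<dots> = 1" using False fh_mult[OF emb_hom, of c "inverse c"] by simp
            finally show ?thesis by (rule inverse_unique)
          qed
          moreover have "poly (map_poly emb p) a \<in> S" using subr_poly[OF S inS_emb[OF S] a] .
          ultimately show ?thesis using S by (simp add: subr_mult subr_neg subr_emb)
        qed
      qed
    qed
  qed
  thus ?thesis using algebraic[of a] by blast
qed

lemma minpoly_ex: assumes S: "subr S"
  shows "\<exists>m. inS S m \<and> lead_coeff m = 1 \<and> poly m z = 0 \<and>
     (\<forall>r. inS S r \<longrightarrow> r \<noteq> 0 \<longrightarrow> poly r z = 0 \<longrightarrow> degree m \<le> degree r)"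
proof -
  obtain p where p: "p \<noteq> 0" "poly (map_poly emb p) z = 0" using algebraic by blast
  let ?P = "\<lambda>r. inS S r \<and> r \<noteq> 0 \<and> poly r z = 0"
  have "?P (map_poly emb p)" using p inS_emb[OF S] map_poly_emb_nz by blast
  then obtain r where r: "?P r" and rmin: "\<forall>y. ?P y \<longrightarrow> degree r \<le> degree y"
    using ex_has_least_nat[of ?P _ degree] by blast
  define m where "m = Polynomial.smult (inverse (lead_coeff r)) r"
  have lr: "lead_coeff r \<noteq> 0" using r by simp
  have "inS S m" unfolding m_def using r S
    by (intro inS_smult subr_inverse) (auto simp: inS_def)
  moreover have "lead_coeff m = 1" unfolding m_def using lr by simp
  moreover have "poly m z = 0" unfolding m_def using r by simp
  moreover have "degree m = degree r" unfolding m_def using lr by simp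
  ultimately show ?thesis using rmin by metis
qed

lemma divide_min: assumes S: "subr S" and m: "inS S m" "lead_coeff m = 1"
  and mmin: "\<forall>r. inS S r \<longrightarrow> r \<noteq> 0 \<longrightarrow> poly r z = 0 \<longrightarrow> degree m \<le> degree r"
    and mz: "poly m z = 0"
  shows "inS S e \<Longrightarrow> poly e z = 0 \<Longrightarrow> \<exists>q. inS S q \<and> e = m * q"
proof (induction "degree e" arbitrary: e rule: less_induct)
  case less
  show ?case
  proof (cases "e = 0")
    case True thus ?thesis using inS_0[OF S] by (intro exI[of _ 0]) simp
  next
    case False
    hence dm: "degree m \<le> degree e" using mmin less.prems by blast
    define c where "c = lead_coeff e"
    define t where "t = monom c (degree e - degree m)"
    define e' where "e' = e - t * m"
    have cS: "c \<in> S" using less.prems unfolding c_def inS_def by blast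
    have tS: "inS S t" unfolding t_def using inS_monom[OF S cS] .
    have e'S: "inS S e'" unfolding e'_def using inS_diff[OF S less.prems(1) inS_mult[OF S tS m(1)]] .
    have pe': "poly e' z = 0" unfolding e'_def using less.prems mz by simp
    have dtm: "degree (t * m) \<le> degree e"
      unfolding t_def using dm degree_mult_le[of "monom c (degree e - degree m)" m] degree_monom_le[of c "degree e - degree m"]
      by linarith
    have "coeff (t * m) (degree e) = c"
    proof -
      show ?thesis unfolding t_def coeff_monom_mult using dm m(2) by simp
    qed
    hence ce': "coeff e' (degree e) = 0" unfolding e'_def c_def by simp
    have de': "degree e' \<le> degree e" unfolding e'_def using dtm degree_diff_le by blast
    show ?thesis
    proof (cases "e' = 0")
      case True
      hence "e = m * t" unfolding e'_def by (simp add: mult.commute)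
      thus ?thesis using tS by blast
    next
      case False
      hence "degree e' \<noteq> degree e" using ce' by (metis leading_coeff_0_iff)
      hence "degree e' < degree e" using de' by simp
      then obtain q' where q': "inS S q'" "e' = m * q'" using less.hyps e'S pe' by blast
      have "e = m * (q' + t)" using q'(2) unfolding e'_def by (simp add: algebra_simps)
      thus ?thesis using inS_add[OF S q'(1) tS] by blast
    qed
  qed
qed

lemma map_poly_add_S: "homon S f \<Longrightarrow> inS S p \<Longrightarrow> inS S q \<Longrightarrow> map_poly f (p + q) = map_poly f p + map_poly f q"
  by (rule poly_eqI) (simp add: coeff_map_poly homon_0 homon_add inS_def)
lemma map_poly_diff_S: "homon S f \<Longrightarrow> subr S \<Longrightarrow> inS S p \<Longrightarrow> inS S q \<Longrightarrow> map_poly f (p - q) = map_poly f p - map_poly f q"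
  by (rule poly_eqI) (simp add: coeff_map_poly homon_0 homon_diff inS_def)
lemma map_poly_mult_S: assumes h: "homon S f" and S: "subr S" and p: "inS S p" and q: "inS S q"
  shows "map_poly f (p * q) = map_poly f p * map_poly f q"
proof (rule poly_eqI)
  fix n
  have "coeff (map_poly f (p * q)) n = f (\<Sum>i\<le>n. coeff p i * coeff q (n - i))"
    by (simp add: coeff_map_poly homon_0[OF h] coeff_mult)
  also have "\<dots> = (\<Sum>i\<le>n. f (coeff p i * coeff q (n - i)))"
    using p q by (intro homon_sum[OF h S]) (auto simp: inS_def subr_mult[OF S])
  also have "\<dots> = (\<Sum>i\<le>n. f (coeff p i) * f (coeff q (n - i)))"
    using p q by (intro sum.cong refl homon_mult[OF h]) (auto simp: inS_def)
  also have "\<dots> = coeff (map_poly f p * map_poly f q) n"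
    by (simp add: coeff_map_poly homon_0[OF h] coeff_mult)
  finally show "coeff (map_poly f (p * q)) n = coeff (map_poly f p * map_poly f q) n" .
qed


lemma map_poly_const: "homon S f \<Longrightarrow> map_poly f [:a:] = [:f a:]"
  by (simp add: map_poly_pCons homon_0)

lemma extend:
  assumes S: "subr S" and h: "homon S f" and m: "inS S m" "lead_coeff m = 1" "poly m z = 0"
    and mmin: "\<forall>r. inS S r \<longrightarrow> r \<noteq> 0 \<longrightarrow> poly r z = 0 \<longrightarrow> degree m \<le> degree r"
    and w: "poly (map_poly f m) w = 0"
  shows "\<exists>S' f'. subr S' \<and> homon S' f' \<and> S \<subseteq> S' \<and> (\<forall>a\<in>S. f' a = f a) \<and>
           (\<forall>g. inS S g \<longrightarrow> poly g z \<in> S' \<and> f' (poly g z) = poly (map_poly f g) w)"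
proof -
  have wd: "poly (map_poly f g) w = poly (map_poly f k) w"
    if g: "inS S g" and k: "inS S k" and eq: "poly g z = poly k z" for g k
  proof -
    have eS: "inS S (g - k)" using inS_diff[OF S g k] .
    have "poly (g - k) z = 0" using eq by simp
    then obtain q where q: "inS S q" "g - k = m * q" using divide_min[OF S m(1,2) mmin m(3) eS] by blast
    have "map_poly f g - map_poly f k = map_poly f (g - k)" using map_poly_diff_S[OF h S g k] by simp
    also have "\<dots> = map_poly f m * map_poly f q" using q(2) map_poly_mult_S[OF h S m(1) q(1)] by simp
    finally have "poly (map_poly f g - map_poly f k) w = 0" using w by simp
    thus ?thesis by simp
  qed
  define S' where "S' = {poly g z | g. inS S g}"
  define f' where "f' a = poly (map_poly f (SOME g. inS S g \<and> a = poly g z)) w" for a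
  have f'eq: "f' (poly g z) = poly (map_poly f g) w" if g: "inS S g" for g
  proof -
    have "\<exists>g'. inS S g' \<and> poly g z = poly g' z" using g by blast
    hence "inS S (SOME g'. inS S g' \<and> poly g z = poly g' z) \<and> poly g z = poly (SOME g'. inS S g' \<and> poly g z = poly g' z) z"
      by (rule someI_ex)
    thus ?thesis unfolding f'_def using wd g by metis
  qed
  have inS': "poly g z \<in> S'" if "inS S g" for g using that unfolding S'_def by blast
  have sub: "S \<subseteq> S'"
  proof
    fix a assume "a \<in> S"
    hence "inS S [:a:]" using inS_const[OF S] by blast
    thus "a \<in> S'" using inS' by fastforce
  qed
  have ext: "\<forall>a\<in>S. f' a = f a"
  proof
    fix a assume a: "a \<in> S"
    hence "inS S [:a:]" using inS_const[OF S] by blast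
    hence "f' (poly [:a:] z) = poly (map_poly f [:a:]) w" using f'eq by blast
    thus "f' a = f a" using map_poly_const[OF h] by simp
  qed
  have S'sub: "subr S'"
    unfolding subr_def
  proof (intro conjI ballI)
    show "range emb \<subseteq> S'" using sub S unfolding subr_def by blast
  next
    fix a b assume "a \<in> S'" "b \<in> S'"
    then obtain g k where g: "inS S g" "a = poly g z" and k: "inS S k" "b = poly k z" unfolding S'_def by blast
    show "a + b \<in> S'" using inS'[OF inS_add[OF S g(1) k(1)]] g k by simp
    show "a * b \<in> S'" using inS'[OF inS_mult[OF S g(1) k(1)]] g k by simp
  next
    fix a assume "a \<in> S'"
    then obtain g where g: "inS S g" "a = poly g z" unfolding S'_def by blast
    show "- a \<in> S'" using inS'[OF inS_neg[OF S g(1)]] g by simp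
  qed
  have hom': "homon S' f'"
    unfolding homon_def
  proof (intro conjI allI ballI)
    fix c show "f' (emb c) = emb c" using ext subr_emb[OF S] h unfolding homon_def by metis
  next
    fix a b assume "a \<in> S'" "b \<in> S'"
    then obtain g k where g: "inS S g" "a = poly g z" and k: "inS S k" "b = poly k z" unfolding S'_def by blast
    have "f' (a + b) = f' (poly (g + k) z)" using g k by simp
    also have "\<dots> = poly (map_poly f (g + k)) w" using f'eq inS_add[OF S g(1) k(1)] by blast
    also have "\<dots> = f' a + f' b" using map_poly_add_S[OF h g(1) k(1)] f'eq g k by simp
    finally show "f' (a + b) = f' a + f' b" .
    have "f' (a * b) = f' (poly (g * k) z)" using g k by simp
    also have "\<dots> = poly (map_poly f (g * k)) w" using f'eq inS_mult[OF S g(1) k(1)] by blast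
    also have "\<dots> = f' a * f' b" using map_poly_mult_S[OF h S g(1) k(1)] f'eq g k by simp
    finally show "f' (a * b) = f' a * f' b" .
  qed
  show ?thesis using S'sub hom' sub ext inS' f'eq by blast
qed

end



context acl begin

definition good :: "('a \<times> 'a) set \<Rightarrow> bool" where
  "good G \<longleftrightarrow> (\<forall>a b c d. (a,b) \<in> G \<longrightarrow> (c,d) \<in> G \<longrightarrow> (a+c, b+d) \<in> G \<and> (a*c, b*d) \<in> G) \<and>
     (\<forall>a b. (a,b) \<in> G \<longrightarrow> (-a, -b) \<in> G) \<and> (\<forall>c. (emb c, emb c) \<in> G) \<and>
     (\<forall>a b b'. (a,b) \<in> G \<longrightarrow> (a,b') \<in> G \<longrightarrow> b = b')"

definition graph :: "'a set \<Rightarrow> ('a \<Rightarrow> 'a) \<Rightarrow> ('a \<times> 'a) set" where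
  "graph S f = {(a, f a) | a. a \<in> S}"

lemma good_graph: assumes S: "subr S" and h: "homon S f" shows "good (graph S f)"
  unfolding good_def graph_def
  using S h subr_add[OF S] subr_mult[OF S] subr_neg[OF S] subr_emb[OF S]
    homon_add[OF h] homon_mult[OF h] homon_neg[OF h S]
  by (auto simp: homon_def)

definition fG :: "('a \<times> 'a) set \<Rightarrow> 'a \<Rightarrow> 'a" where
  "fG G a = (THE b. (a, b) \<in> G)"

lemma fG_eq: "good G \<Longrightarrow> (a, b) \<in> G \<Longrightarrow> fG G a = b"
  unfolding fG_def good_def by (intro the_equality) blast+

lemma good_Domain_subr: "good G \<Longrightarrow> subr (Domain G)"
  unfolding subr_def good_def by (auto simp: Domain_iff) blast+

lemma good_Domain_homon: assumes g: "good G" shows "homon (Domain G) (fG G)"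
  unfolding homon_def
proof (intro conjI allI ballI)
  fix c show "fG G (emb c) = emb c" using g fG_eq unfolding good_def by blast
next
  fix a b assume "a \<in> Domain G" "b \<in> Domain G"
  then obtain a' b' where ab: "(a, a') \<in> G" "(b, b') \<in> G" by blast
  hence "(a + b, a' + b') \<in> G" "(a * b, a' * b') \<in> G" using g unfolding good_def by blast+
  thus "fG G (a + b) = fG G a + fG G b" "fG G (a * b) = fG G a * fG G b"
    using fG_eq[OF g] ab by simp_all
qed

lemma good_graph_eq: "good G \<Longrightarrow> graph (Domain G) (fG G) = G"
  unfolding graph_def using fG_eq by fastforce

lemma exists_aut:
  assumes S: "subr S" and h: "homon S f"
  shows "\<exists>\<sigma>. is_field_hom \<sigma> \<and> (\<forall>a\<in>S. \<sigma> a = f a) \<and> (\<forall>c. \<sigma> (emb c) = emb c)"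
proof -
  define A where "A = {G. good G \<and> graph S f \<subseteq> G}"
  have G0: "graph S f \<in> A" unfolding A_def using good_graph[OF S h] by blast
  have "\<forall>C\<in>chains A. \<exists>U\<in>A. \<forall>X\<in>C. X \<subseteq> U"
  proof
    fix C assume C: "C \<in> chains A"
    show "\<exists>U\<in>A. \<forall>X\<in>C. X \<subseteq> U"
    proof (cases "C = {}")
      case True thus ?thesis using G0 by blast
    next
      case False
      have CA: "C \<subseteq> A" using C unfolding chains_def by blast
      have cmp: "\<And>X Y. X \<in> C \<Longrightarrow> Y \<in> C \<Longrightarrow> X \<subseteq> Y \<or> Y \<subseteq> X" using chainsD[OF C] by blast
      have gX: "\<And>X. X \<in> C \<Longrightarrow> good X" using CA unfolding A_def by blast
      have "good (\<Union>C)" unfolding good_def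
      proof (intro conjI allI impI)
        fix a b c d assume "(a, b) \<in> \<Union>C" "(c, d) \<in> \<Union>C"
        then obtain X Y where X: "X \<in> C" "(a, b) \<in> X" and Y: "Y \<in> C" "(c, d) \<in> Y" by blast
        from cmp[OF X(1) Y(1)] obtain Z where Z: "Z \<in> C" "(a, b) \<in> Z" "(c, d) \<in> Z" using X Y by blast
        hence "(a+c, b+d) \<in> Z" "(a*c, b*d) \<in> Z" using gX[OF Z(1)] unfolding good_def by blast+
        thus "(a+c, b+d) \<in> \<Union>C" "(a*c, b*d) \<in> \<Union>C" using Z(1) by blast+
      next
        fix a b assume "(a, b) \<in> \<Union>C"
        then obtain X where X: "X \<in> C" "(a, b) \<in> X" by blast
        thus "(-a, -b) \<in> \<Union>C" using gX[OF X(1)] unfolding good_def by blast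
      next
        fix c
        obtain X where "X \<in> C" using False by blast
        thus "(emb c, emb c) \<in> \<Union>C" using gX unfolding good_def by blast
      next
        fix a b b' assume "(a, b) \<in> \<Union>C" "(a, b') \<in> \<Union>C"
        then obtain X Y where X: "X \<in> C" "(a, b) \<in> X" and Y: "Y \<in> C" "(a, b') \<in> Y" by blast
        from cmp[OF X(1) Y(1)] obtain Z where Z: "Z \<in> C" "(a, b) \<in> Z" "(a, b') \<in> Z" using X Y by blast
        thus "b = b'" using gX[OF Z(1)] unfolding good_def by blast
      qed
      moreover have "graph S f \<subseteq> \<Union>C" using False CA unfolding A_def by blast
      ultimately show ?thesis unfolding A_def by blast
    qed
  qed
  then obtain M where M: "M \<in> A" and Mmax: "\<forall>X\<in>A. M \<subseteq> X \<longrightarrow> X = M"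
    using Zorn_Lemma2[of A] by blast
  have gM: "good M" and sM: "graph S f \<subseteq> M" using M unfolding A_def by blast+
  define D where "D = Domain M"
  define g where "g = fG M"
  have D: "subr D" unfolding D_def using good_Domain_subr[OF gM] .
  have hg: "homon D g" unfolding D_def g_def using good_Domain_homon[OF gM] .
  have DU: "D = UNIV"
  proof (rule ccontr)
    assume "D \<noteq> UNIV"
    then obtain z where z: "z \<notin> D" by blast
    obtain m where m: "inS D m" "lead_coeff m = 1" "poly m z = 0"
      and mmin: "\<forall>r. inS D r \<longrightarrow> r \<noteq> 0 \<longrightarrow> poly r z = 0 \<longrightarrow> degree m \<le> degree r"
      using minpoly_ex[OF D] by blast
    have dm: "degree m > 0"
    proof (rule ccontr)
      assume "\<not> degree m > 0"
      hence d0: "degree m = 0" by simp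
      have "poly m z = (\<Sum>i\<le>degree m. coeff m i * z ^ i)" by (rule poly_altdef)
      also have "\<dots> = 1" using d0 m(2) by simp
      finally show False using m(3) by simp
    qed
    have "coeff (map_poly g m) (degree m) = 1" using m(2) by (simp add: coeff_map_poly homon_0[OF hg] homon_1[OF hg])
    hence "degree (map_poly g m) \<ge> degree m" by (simp add: le_degree)
    hence "degree (map_poly g m) > 0" using dm by simp
    then obtain w where w: "poly (map_poly g m) w = 0" using alg_closed by blast
    obtain S' f' where S': "subr S'" "homon S' f'" "D \<subseteq> S'" "\<forall>a\<in>D. f' a = g a"
      "\<forall>k. inS D k \<longrightarrow> poly k z \<in> S' \<and> f' (poly k z) = poly (map_poly g k) w"
      using extend[OF D hg m mmin w] by blast
    have zS': "z \<in> S'" using S'(5) inS_X[OF D] by fastforce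
    have "M = graph D g" using good_graph_eq[OF gM] unfolding D_def g_def by simp
    hence "M \<subseteq> graph S' f'" using S'(3,4) unfolding graph_def by force
    moreover have "graph S' f' \<in> A" using good_graph[OF S'(1,2)] sM \<open>M \<subseteq> graph S' f'\<close> unfolding A_def by blast
    ultimately have "graph S' f' = M" using Mmax by blast
    hence "z \<in> Domain M" using zS' unfolding graph_def by blast
    thus False using z D_def by blast
  qed
  have fh: "is_field_hom g" unfolding is_field_hom_def
    using homon_1[OF hg] homon_add[OF hg] homon_mult[OF hg] DU by simp
  have "\<forall>a\<in>S. g a = f a" using sM fG_eq[OF gM] unfolding g_def graph_def by blast
  moreover have "\<forall>c. g (emb c) = emb c" using hg unfolding homon_def by blast
  ultimately show ?thesis using fh by blast
qed

end



context acl begin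

lemma subr_UNIV: "subr UNIV" unfolding subr_def by blast
lemma homon_UNIV: "is_field_hom \<sigma> \<Longrightarrow> \<forall>c. \<sigma> (emb c) = emb c \<Longrightarrow> homon UNIV \<sigma>"
  unfolding homon_def is_field_hom_def by blast

lemma aut_surj: assumes fh: "is_field_hom \<sigma>" and fx: "\<forall>c. \<sigma> (emb c) = emb c"
  shows "surj \<sigma>"
proof -
  have h: "homon UNIV \<sigma>" using homon_UNIV[OF fh fx] .
  show ?thesis
  unfolding surj_def
  proof
    fix b
    obtain p where p: "p \<noteq> 0" "poly (map_poly emb p) b = 0" using algebraic by blast
    define P where "P = map_poly emb p"
    have Pnz: "P \<noteq> 0" unfolding P_def using map_poly_emb_nz[OF p(1)] .
    define R where "R = {t. poly P t = 0}"
    have fin: "finite R" unfolding R_def using poly_roots_finite[OF Pnz] .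
    have mP: "map_poly \<sigma> P = P"
      by (rule poly_eqI) (simp add: P_def coeff_map_poly fx fh_0[OF fh])
    have "\<sigma> ` R \<subseteq> R"
    proof
      fix t assume "t \<in> \<sigma> ` R"
      then obtain s where s: "s \<in> R" "t = \<sigma> s" by blast
      have "\<sigma> (poly P s) = poly (map_poly \<sigma> P) (\<sigma> s)"
        using homon_poly[OF h subr_UNIV] unfolding inS_def by blast
      thus "t \<in> R" using s mP fh_0[OF fh] unfolding R_def by simp
    qed
    moreover have "inj_on \<sigma> R" using fh_inj[OF fh] by (simp add: inj_on_def inj_def)
    ultimately have "\<sigma> ` R = R" using endo_inj_surj[OF fin] by blast
    moreover have "b \<in> R" unfolding R_def P_def using p by simp
    ultimately show "\<exists>a. b = \<sigma> a" by (metis imageE)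
  qed
qed

lemma subr_range: "subr (range emb)"
  unfolding subr_def using fh_add[OF emb_hom] fh_mult[OF emb_hom] fh_neg[OF emb_hom]
  by (auto simp: image_iff) (metis fh_add[OF emb_hom], metis fh_mult[OF emb_hom], metis fh_neg[OF emb_hom])

lemma homon_id: "homon S id" unfolding homon_def by simp

lemma fixed_field:
  assumes x: "x \<notin> range emb"
  shows "\<exists>\<sigma>\<in>galois_group emb. \<sigma> x \<noteq> x"
proof -
  let ?S = "range emb"
  have S: "subr ?S" by (rule subr_range)
  obtain m where m: "inS ?S m" "lead_coeff m = 1" "poly m x = 0"
    and mmin: "\<forall>r. inS ?S r \<longrightarrow> r \<noteq> 0 \<longrightarrow> poly r x = 0 \<longrightarrow> degree m \<le> degree r"
    using minpoly_ex[OF S] by blast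
  have pm: "poly m x = (\<Sum>i\<le>degree m. coeff m i * x ^ i)" by (rule poly_altdef)
  have d0: "degree m \<noteq> 0"
  proof
    assume "degree m = 0"
    hence "poly m x = 1" using pm m(2) by simp
    thus False using m(3) by simp
  qed
  have d1: "degree m \<noteq> 1"
  proof
    assume d: "degree m = 1"
    hence "poly m x = coeff m 0 + x" using pm m(2) by simp
    hence "x = - coeff m 0" using m(3) by (simp add: eq_neg_iff_add_eq_0 add.commute)
    moreover have "coeff m 0 \<in> ?S" using m(1) unfolding inS_def by blast
    ultimately have "x \<in> ?S" using subr_neg[OF S] by simp
    thus False using x by blast
  qed
  have "\<exists>y. poly m y = 0 \<and> y \<noteq> x"
  proof (rule ccontr)
    assume H: "\<not> (\<exists>y. poly m y = 0 \<and> y \<noteq> x)"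
    define L where "L = [:- x, 1:]"
    have "L dvd m" unfolding L_def using m(3) poly_eq_0_iff_dvd by blast
    then obtain q where q: "m = L * q" by (elim dvdE)
    have mnz: "m \<noteq> 0" using m(2) by auto
    hence qnz: "q \<noteq> 0" using q by auto
    have dL: "degree L = 1" unfolding L_def by simp
    have "degree m = 1 + degree q" using q degree_mult_eq[of L q] qnz dL unfolding L_def by simp
    hence "degree q > 0" using d0 d1 by simp
    then obtain t where t: "poly q t = 0" using alg_closed by blast
    hence "poly m t = 0" using q by simp
    hence "t = x" using H by blast
    hence "L dvd q" unfolding L_def using t poly_eq_0_iff_dvd by blast
    then obtain q2 where q2: "q = L * q2" by (elim dvdE)
    have "pderiv m = L * pderiv (L * q2) + (L * q2) * pderiv L" using q q2 pderiv_mult by simp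
    hence pd: "poly (pderiv m) x = 0" unfolding L_def by simp
    have ofn: "of_nat k = emb (of_nat k)" for k using fh_of_nat[OF emb_hom, of k] by simp
    have "inS ?S (pderiv m)" unfolding inS_def
    proof
      fix n
      have e: "(of_nat (Suc n)::'a) = emb (of_nat (Suc n))" by (rule ofn)
      have "coeff (pderiv m) n = emb (of_nat (Suc n)) * coeff m (Suc n)"
        by (simp only: coeff_pderiv e)
      thus "coeff (pderiv m) n \<in> ?S" using m(1) subr_mult[OF S] subr_emb[OF S] unfolding inS_def by simp
    qed
    moreover have "pderiv m \<noteq> 0"
    proof
      assume "pderiv m = 0"
      hence "coeff (pderiv m) (degree m - 1) = 0" by simp
      hence "of_nat (degree m) * lead_coeff m = (0::'a)" using d0 by (simp add: coeff_pderiv)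
      hence "emb (of_nat (degree m)) = 0" using m(2) ofn by simp
      hence "(of_nat (degree m) :: complex fls) = 0" using fh_zero_iff[OF emb_hom] by blast
      thus False using d0 by simp
    qed
    moreover have "degree (pderiv m) < degree m"
    proof -
      have "degree (pderiv m) \<le> degree m - 1"
        by (rule degree_le) (auto simp: coeff_pderiv coeff_eq_0)
      thus ?thesis using d0 by simp
    qed
    ultimately show False using mmin pd by fastforce
  qed
  then obtain y where y: "poly m y = 0" "y \<noteq> x" by blast
  have w: "poly (map_poly id m) y = 0" using y by simp
  obtain S' f' where S': "subr S'" "homon S' f'"
      "\<forall>k. inS ?S k \<longrightarrow> poly k x \<in> S' \<and> f' (poly k x) = poly (map_poly id k) y"
    using extend[OF S homon_id m mmin w] by blast
  have "x \<in> S' \<and> f' x = y" using S'(3) inS_X[OF S] by fastforce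
  moreover obtain \<sigma> where \<sigma>: "is_field_hom \<sigma>" "\<forall>a\<in>S'. \<sigma> a = f' a" "\<forall>c. \<sigma> (emb c) = emb c"
    using exists_aut[OF S'(1,2)] by blast
  ultimately have "\<sigma> x = y" by simp
  moreover have "\<sigma> \<in> galois_group emb"
    unfolding galois_group_def using \<sigma>(1,3) aut_surj[OF \<sigma>(1,3)] fh_inj[OF \<sigma>(1)] bij_def by blast
  ultimately show ?thesis using y(2) by blast
qed

end



lemma one_term: "a < (n::nat) \<Longrightarrow> (\<And>i. i < n \<Longrightarrow> i \<noteq> a \<Longrightarrow> F i = 0) \<Longrightarrow> (\<Sum>i<n. F i) = (F a :: 'a::comm_monoid_add)"
proof -
  assume a: "a < n" and z: "\<And>i. i < n \<Longrightarrow> i \<noteq> a \<Longrightarrow> F i = 0"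
  have "(\<Sum>i<n. F i) = F a + (\<Sum>i\<in>{..<n} - {a}. F i)" using a by (intro sum.remove) auto
  also have "(\<Sum>i\<in>{..<n} - {a}. F i) = 0" using z by (intro sum.neutral) auto
  finally show ?thesis by simp
qed

lemma swap1: "(\<Sum>b\<in>A. \<Sum>i\<in>B. g b i) = (\<Sum>i\<in>B. \<Sum>b\<in>A. g b i)"
  by (rule sum.swap)
lemma swap2: "(\<Sum>b\<in>A. \<Sum>i\<in>B. \<Sum>j\<in>C. g b i j) = (\<Sum>i\<in>B. \<Sum>j\<in>C. \<Sum>b\<in>A. g b i j)"
  by (subst sum.swap) (intro sum.cong refl swap1)
lemma swap3: "(\<Sum>b\<in>A. \<Sum>i\<in>B. \<Sum>j\<in>C. \<Sum>k\<in>D. g b i j k) = (\<Sum>i\<in>B. \<Sum>j\<in>C. \<Sum>k\<in>D. \<Sum>b\<in>A. g b i j k)"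
  by (subst sum.swap) (intro sum.cong refl swap2)
lemma swap4: "(\<Sum>b\<in>A. \<Sum>i\<in>B. \<Sum>j\<in>C. \<Sum>k\<in>D. \<Sum>l\<in>E. g b i j k l) = (\<Sum>i\<in>B. \<Sum>j\<in>C. \<Sum>k\<in>D. \<Sum>l\<in>E. \<Sum>b\<in>A. g b i j k l)"
  by (subst sum.swap) (intro sum.cong refl swap3)

lemma prod_sums: "(f::'a::comm_ring_1) * (\<Sum>b\<in>A. X b) * (\<Sum>d\<in>B. Y d) = (\<Sum>b\<in>A. \<Sum>d\<in>B. f * (X b * Y d))"
proof -
  have "f * (\<Sum>b\<in>A. X b) * (\<Sum>d\<in>B. Y d) = f * ((\<Sum>b\<in>A. X b) * (\<Sum>d\<in>B. Y d))" by (rule mult.assoc)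
  also have "\<dots> = f * (\<Sum>b\<in>A. \<Sum>d\<in>B. X b * Y d)" by (simp only: sum_product)
  also have "\<dots> = (\<Sum>b\<in>A. \<Sum>d\<in>B. f * (X b * Y d))" by (simp only: sum_distrib_left)
  finally show ?thesis .
qed

lemma contract:
  fixes F :: "nat \<Rightarrow> nat \<Rightarrow> nat \<Rightarrow> nat \<Rightarrow> 'a::comm_ring_1" and P Q :: "nat \<Rightarrow> nat \<Rightarrow> 'a"
  assumes PQ: "\<And>j m. j < n \<Longrightarrow> m < n \<Longrightarrow> (\<Sum>b<n. P j b * Q b m) = (if j = m then 1 else 0)"
    and m: "m < n" and p: "p < n"
  shows "(\<Sum>b<n. \<Sum>d<n. (\<Sum>i<n. \<Sum>j<n. \<Sum>k<n. \<Sum>l<n. F i j k l * P j b * P l d) * Q b m * Q d p)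
       = (\<Sum>i<n. \<Sum>k<n. F i m k p)"
proof -
  have "(\<Sum>b<n. \<Sum>d<n. (\<Sum>i<n. \<Sum>j<n. \<Sum>k<n. \<Sum>l<n. F i j k l * P j b * P l d) * Q b m * Q d p)
     = (\<Sum>b<n. \<Sum>d<n. \<Sum>i<n. \<Sum>j<n. \<Sum>k<n. \<Sum>l<n. F i j k l * ((P j b * Q b m) * (P l d * Q d p)))"
    by (simp only: sum_distrib_right) (intro sum.cong refl; simp add: mult_ac)
  also have "\<dots> = (\<Sum>b<n. \<Sum>i<n. \<Sum>j<n. \<Sum>k<n. \<Sum>l<n. \<Sum>d<n. F i j k l * ((P j b * Q b m) * (P l d * Q d p)))"
    by (intro sum.cong refl swap4)
  also have "\<dots> = (\<Sum>i<n. \<Sum>j<n. \<Sum>k<n. \<Sum>l<n. \<Sum>b<n. \<Sum>d<n. F i j k l * ((P j b * Q b m) * (P l d * Q d p)))"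
    by (rule swap4)
  also have "\<dots> = (\<Sum>i<n. \<Sum>j<n. \<Sum>k<n. \<Sum>l<n. F i j k l * (\<Sum>b<n. P j b * Q b m) * (\<Sum>d<n. P l d * Q d p))"
    by (intro sum.cong refl) (rule prod_sums[symmetric])
  also have "\<dots> = (\<Sum>i<n. \<Sum>j<n. \<Sum>k<n. \<Sum>l<n. F i j k l * (if j = m then 1 else 0) * (if l = p then 1 else 0))"
    using PQ m p by (intro sum.cong refl) simp
  also have "\<dots> = (\<Sum>i<n. \<Sum>k<n. F i m k p)"
  proof (rule sum.cong[OF refl])
    fix i assume "i \<in> {..<n}"
    have "(\<Sum>j<n. \<Sum>k<n. \<Sum>l<n. F i j k l * (if j = m then 1 else 0) * (if l = p then 1 else 0))
       = (\<Sum>k<n. \<Sum>l<n. F i m k l * (if l = p then 1 else 0))"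
      using m by (subst one_term[of m]) auto
    also have "\<dots> = (\<Sum>k<n. F i m k p)"
    proof (rule sum.cong[OF refl])
      fix k show "(\<Sum>l<n. F i m k l * (if l = p then 1 else 0)) = F i m k p"
        using p by (subst one_term[of p]) auto
    qed
    finally show "(\<Sum>j<n. \<Sum>k<n. \<Sum>l<n. F i j k l * (if j = m then 1 else 0) * (if l = p then 1 else 0)) = (\<Sum>k<n. F i m k p)" .
  qed
  finally show ?thesis .
qed

lemma two_term:
  assumes "u < (n::nat)" "v < n" "\<And>i k. i < n \<Longrightarrow> k < n \<Longrightarrow> (i, k) \<noteq> (u, v) \<Longrightarrow> G i k = 0"
  shows "(\<Sum>i<n. \<Sum>k<n. G i k) = (G u v :: 'a::comm_monoid_add)"
proof -
  have "(\<Sum>i<n. \<Sum>k<n. G i k) = (\<Sum>k<n. G u k)"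
    using assms by (intro one_term[OF assms(1)] sum.neutral) auto
  also have "\<dots> = G u v" using assms by (intro one_term[OF assms(2)]) auto
  finally show ?thesis .
qed

lemma sum_if2:
  assumes "u < (n::nat)" "v < n" "\<And>i k. P i k \<Longrightarrow> i = u \<and> k = v"
  shows "(\<Sum>i<n. \<Sum>k<n. g i k * (if P i k then c else 0)) = (if P u v then g u v * c else (0::'a::field))"
proof -
  have "(\<Sum>i<n. \<Sum>k<n. g i k * (if P i k then c else 0)) = g u v * (if P u v then c else 0)"
  proof (rule two_term[OF assms(1,2)])
    fix i k assume "(i, k) \<noteq> (u, v)"
    hence "\<not> P i k" using assms(3) by blast
    thus "g i k * (if P i k then c else 0) = 0" by simp
  qed
  thus ?thesis by simp
qed

lemma lin3: "(\<Sum>x\<in>A. a x + c * b x - c * d x) = (\<Sum>x\<in>A. a x) + (c::'a::field) * ((\<Sum>x\<in>A. b x) - (\<Sum>x\<in>A. d x))"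
  by (simp add: sum.distrib sum_subtractf sum_distrib_left right_diff_distrib)

lemma rDJ_split: "(\<Sum>i<n. \<Sum>k<n. (g i k :: 'a::field) * ((A i k) + 1/2 * (B i k - C i k))) =
   (\<Sum>i<(n::nat). \<Sum>k<n. g i k * A i k) + 1/2 * ((\<Sum>i<n. \<Sum>k<n. g i k * B i k) - (\<Sum>i<n. \<Sum>k<n. g i k * C i k))"
proof -
  have "(\<Sum>i<n. \<Sum>k<n. g i k * ((A i k) + 1/2 * (B i k - C i k))) =
     (\<Sum>i<n. \<Sum>k<n. g i k * A i k + 1/2 * (g i k * B i k) - 1/2 * (g i k * C i k))"
    by (intro sum.cong refl) (simp add: algebra_simps)
  also have "\<dots> = (\<Sum>i<n. (\<Sum>k<n. g i k * A i k) + 1/2 * (\<Sum>k<n. g i k * B i k) - 1/2 * (\<Sum>k<n. g i k * C i k))"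
    by (intro sum.cong refl) (simp only: lin3 right_diff_distrib add_diff_eq)
  also have "\<dots> = (\<Sum>i<n. \<Sum>k<n. g i k * A i k) + 1/2 * ((\<Sum>i<n. \<Sum>k<n. g i k * B i k) - (\<Sum>i<n. \<Sum>k<n. g i k * C i k))"
    by (rule lin3)
  finally show ?thesis .
qed

lemma rDJ_left:
  fixes g :: "nat \<Rightarrow> nat \<Rightarrow> 'a::field"
  assumes m: "m < n" and p: "p < n"
  shows "(\<Sum>i<n. \<Sum>k<n. g i k * r_DJ n i m k p) =
     (if p < m then g p m else 0) + 1/2 * ((if m = p then g m p else 0) - g m p / of_nat n)"
proof -
  have "(\<Sum>i<n. \<Sum>k<n. g i k * r_DJ n i m k p) =
     (\<Sum>i<n. \<Sum>k<n. g i k * (if i < m \<and> k = m \<and> p = i then 1 else 0)) +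
     1/2 * ((\<Sum>i<n. \<Sum>k<n. g i k * (if i = m \<and> k = p \<and> i = k then 1 else 0)) -
            (\<Sum>i<n. \<Sum>k<n. g i k * (if i = m \<and> k = p then 1 / of_nat n else 0)))"
    unfolding r_DJ_def by (rule rDJ_split)
  also have "\<dots> = (if p < m then g p m else 0) + 1/2 * ((if m = p then g m p else 0) - g m p / of_nat n)"
  proof -
    have e1: "(\<Sum>i<n. \<Sum>k<n. g i k * (if i < m \<and> k = m \<and> p = i then 1 else 0)) = (if p < m then g p m else 0)"
      using sum_if2[of p n m "\<lambda>i k. i < m \<and> k = m \<and> p = i" g 1] p m by simp
    have e2: "(\<Sum>i<n. \<Sum>k<n. g i k * (if i = m \<and> k = p \<and> i = k then 1 else 0)) = (if m = p then g m p else 0)"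
      using sum_if2[of m n p "\<lambda>i k. i = m \<and> k = p \<and> i = k" g 1] p m by simp
    have e3: "(\<Sum>i<n. \<Sum>k<n. g i k * (if i = m \<and> k = p then 1 / of_nat n else 0)) = g m p / of_nat n"
      using sum_if2[of m n p "\<lambda>i k. i = m \<and> k = p" g "1 / of_nat n"] p m by simp
    show ?thesis by (simp only: e1 e2 e3)
  qed
  finally show ?thesis .
qed

lemma rDJ_right:
  fixes h :: "nat \<Rightarrow> nat \<Rightarrow> 'a::field"
  assumes a: "a < n" and c: "c < n"
  shows "(\<Sum>b<n. \<Sum>d<n. r_DJ n a b c d * h b d) =
     (if a < c then h c a else 0) + 1/2 * ((if a = c then h a c else 0) - h a c / of_nat n)"
proof -
  have "(\<Sum>b<n. \<Sum>d<n. r_DJ n a b c d * h b d) = (\<Sum>b<n. \<Sum>d<n. h b d * r_DJ n a b c d)"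
    by (simp add: mult.commute)
  also have "\<dots> =
     (\<Sum>b<n. \<Sum>d<n. h b d * (if a < b \<and> c = b \<and> d = a then 1 else 0)) +
     1/2 * ((\<Sum>b<n. \<Sum>d<n. h b d * (if a = b \<and> c = d \<and> a = c then 1 else 0)) -
            (\<Sum>b<n. \<Sum>d<n. h b d * (if a = b \<and> c = d then 1 / of_nat n else 0)))"
    unfolding r_DJ_def by (rule rDJ_split)
  also have "\<dots> = (if a < c then h c a else 0) + 1/2 * ((if a = c then h a c else 0) - h a c / of_nat n)"
  proof -
    have e1: "(\<Sum>b<n. \<Sum>d<n. h b d * (if a < b \<and> c = b \<and> d = a then 1 else 0)) = (if a < c then h c a else 0)"
      using sum_if2[of c n a "\<lambda>b d. a < b \<and> c = b \<and> d = a" h 1] a c by simp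
    have e2: "(\<Sum>b<n. \<Sum>d<n. h b d * (if a = b \<and> c = d \<and> a = c then 1 else 0)) = (if a = c then h a c else 0)"
      using sum_if2[of a n c "\<lambda>b d. a = b \<and> c = d \<and> a = c" h 1] a c by simp
    have e3: "(\<Sum>b<n. \<Sum>d<n. h b d * (if a = b \<and> c = d then 1 / of_nat n else 0)) = h a c / of_nat n"
      using sum_if2[of a n c "\<lambda>b d. a = b \<and> c = d" h "1 / of_nat n"] a c by simp
    show ?thesis by (simp only: e1 e2 e3)
  qed
  finally show ?thesis .
qed




lemma minv_props:
  assumes X: "X \<in> carrier_mat n n" and inv: "invertible_mat X"
  shows "minv X \<in> carrier_mat n n \<and> X * minv X = 1\<^sub>m n \<and> minv X * X = 1\<^sub>m n"
proof -
  obtain B where B: "X * B = 1\<^sub>m n" "B * X = 1\<^sub>m (dim_row B)"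
    using inv X unfolding invertible_mat_def inverts_mat_def by auto
  have "dim_col B = n" using arg_cong[OF B(1), of dim_col] by simp
  moreover have "dim_row B = n" using arg_cong[OF B(2), of dim_col] X by simp
  ultimately have Bc: "B \<in> carrier_mat n n" by auto
  have U: "X \<in> Units (ring_mat TYPE('a) n ())"
    unfolding Units_def using X Bc B by (auto simp: ring_mat_simps)
  have "mat_inverse X \<noteq> None"
  proof
    assume "mat_inverse X = None"
    from mat_inverse(1)[OF X this] have "X \<notin> Units (ring_mat TYPE('a) n ())" .
    thus False using U by blast
  qed
  then obtain C where C: "mat_inverse X = Some C" by blast
  thus ?thesis using mat_inverse(2)[OF X C] unfolding minv_def by simp
qed

lemma mult_entry:
  "A \<in> carrier_mat n n \<Longrightarrow> B \<in> carrier_mat n n \<Longrightarrow> i < n \<Longrightarrow> j < n \<Longrightarrow>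
    (A * B) $$ (i, j) = (\<Sum>k<n. A $$ (i, k) * B $$ (k, j))"
  by (simp add: scalar_prod_def atLeast0LessThan)

lemma cancelW: "x + 1/2*(u - w) = x' + 1/2*(u' - w) \<Longrightarrow> x + 1/2*u = x' + 1/2*(u'::'a::field)"
  by (simp only: right_diff_distrib add_diff_eq) simp

lemma centr_CE:
  fixes Y :: "'a::field mat"
  assumes Y: "Y \<in> centralizer n (r_DJ n)" and a: "a < n" and c: "c < n" and m: "m < n" and p: "p < n"
  shows "(if p < m then Y $$ (a, p) * Y $$ (c, m) else 0) + 1/2 * (if m = p then Y $$ (a, m) * Y $$ (c, p) else 0)
       = (if a < c then Y $$ (c, m) * Y $$ (a, p) else 0) + 1/2 * (if a = c then Y $$ (a, m) * Y $$ (c, p) else 0)"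
proof -
  have Yc: "Y \<in> carrier_mat n n" and Yi: "invertible_mat Y"
    and ad: "\<And>a b c d. a < n \<Longrightarrow> b < n \<Longrightarrow> c < n \<Longrightarrow> d < n \<Longrightarrow> Ad_tensor n Y (r_DJ n) a b c d = r_DJ n a b c d"
    using Y unfolding centralizer_def by auto
  define Y' where "Y' = minv Y"
  have Y': "Y' \<in> carrier_mat n n" "Y' * Y = 1\<^sub>m n" using minv_props[OF Yc Yi] unfolding Y'_def by auto
  have PQ: "(\<Sum>b<n. Y' $$ (j, b) * Y $$ (b, m)) = (if j = m then 1 else 0)" if "j < n" "m < n" for j m
    using mult_entry[OF Y'(1) Yc that] Y'(2) that by simp
  define F where "F i j k l = Y $$ (a, i) * Y $$ (c, k) * r_DJ n i j k l" for i j k l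
  have C: "(\<Sum>b<n. \<Sum>d<n. (\<Sum>i<n. \<Sum>j<n. \<Sum>k<n. \<Sum>l<n. F i j k l * Y' $$ (j, b) * Y' $$ (l, d)) * Y $$ (b, m) * Y $$ (d, p))
       = (\<Sum>i<n. \<Sum>k<n. F i m k p)"
    by (rule contract[of n "\<lambda>j b. Y' $$ (j, b)" "\<lambda>b m. Y $$ (b, m)", OF PQ m p])
  have L: "(\<Sum>b<n. \<Sum>d<n. (\<Sum>i<n. \<Sum>j<n. \<Sum>k<n. \<Sum>l<n. F i j k l * Y' $$ (j, b) * Y' $$ (l, d)) * Y $$ (b, m) * Y $$ (d, p))
      = (\<Sum>b<n. \<Sum>d<n. r_DJ n a b c d * (Y $$ (b, m) * Y $$ (d, p)))"
  proof (rule sum.cong[OF refl], rule sum.cong[OF refl])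
    fix b d assume b: "b \<in> {..<n}" and d: "d \<in> {..<n}"
    have "(\<Sum>i<n. \<Sum>j<n. \<Sum>k<n. \<Sum>l<n. F i j k l * Y' $$ (j, b) * Y' $$ (l, d)) = Ad_tensor n Y (r_DJ n) a b c d"
      unfolding Ad_tensor_def F_def Y'_def by (intro sum.cong refl) (simp add: mult_ac)
    also have "\<dots> = r_DJ n a b c d" using ad a b c d by simp
    finally show "(\<Sum>i<n. \<Sum>j<n. \<Sum>k<n. \<Sum>l<n. F i j k l * Y' $$ (j, b) * Y' $$ (l, d)) * Y $$ (b, m) * Y $$ (d, p)
       = r_DJ n a b c d * (Y $$ (b, m) * Y $$ (d, p))" by (simp add: mult_ac)
  qed
  have R: "(\<Sum>i<n. \<Sum>k<n. F i m k p) = (\<Sum>i<n. \<Sum>k<n. (Y $$ (a, i) * Y $$ (c, k)) * r_DJ n i m k p)"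
    unfolding F_def by simp
  have eq: "(\<Sum>i<n. \<Sum>k<n. (Y $$ (a, i) * Y $$ (c, k)) * r_DJ n i m k p)
      = (\<Sum>b<n. \<Sum>d<n. r_DJ n a b c d * (Y $$ (b, m) * Y $$ (d, p)))"
    by (rule trans[OF sym[OF R] trans[OF sym[OF C] L]])
  have "(if p < m then Y $$ (a, p) * Y $$ (c, m) else 0) + 1/2 * ((if m = p then Y $$ (a, m) * Y $$ (c, p) else 0) - Y $$ (a, m) * Y $$ (c, p) / of_nat n)
     = (\<Sum>i<n. \<Sum>k<n. (Y $$ (a, i) * Y $$ (c, k)) * r_DJ n i m k p)"
    using rDJ_left[OF m p, of "\<lambda>i k. Y $$ (a, i) * Y $$ (c, k)"] by simp
  also have "\<dots> = (\<Sum>b<n. \<Sum>d<n. r_DJ n a b c d * (Y $$ (b, m) * Y $$ (d, p)))" by (rule eq)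
  also have "\<dots> = (if a < c then Y $$ (c, m) * Y $$ (a, p) else 0) + 1/2 * ((if a = c then Y $$ (a, m) * Y $$ (c, p) else 0) - Y $$ (a, m) * Y $$ (c, p) / of_nat n)"
    using rDJ_right[OF a c, of "\<lambda>b d. Y $$ (b, m) * Y $$ (d, p)"] by simp
  finally show ?thesis by (rule cancelW)
qed

lemma half_eq: assumes two: "(2::'a::field) \<noteq> 0" shows "1/2 * z = z \<Longrightarrow> z = (0::'a)"
proof -
  assume e: "1/2 * z = z"
  have a: "(2 * (1/2)) * z = 2 * z" by (simp only: mult.assoc e)
  have h: "2 * (1/2) = (1::'a)" using two by simp
  have "z = 2 * z" using a unfolding h mult_1_left .
  hence "z = z + z" by (simp only: mult_2)
  thus "z = 0" by (simp only: add_cancel_right_right)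
qed

lemmas CEsimps = less_irrefl if_False if_True simp_thms add_0_left add_0_right mult_zero_right

lemma centr_col:
  assumes Y: "Y \<in> centralizer n (r_DJ n)" and two: "(2::'a::field) \<noteq> 0"
    and a: "a < n" and c: "c < n" and m: "m < n" and ac: "a \<noteq> c"
  shows "Y $$ (a, m) * Y $$ (c, m) = (0::'a)"
proof -
  have e: "1/2 * (Y $$ (a, m) * Y $$ (c, m)) = (if a < c then Y $$ (c, m) * Y $$ (a, m) else 0)"
    using centr_CE[OF Y a c m m] ac by (simp only: CEsimps)
  show ?thesis
  proof (cases "a < c")
    case True
    have "1/2 * (Y $$ (a, m) * Y $$ (c, m)) = Y $$ (c, m) * Y $$ (a, m)" using e by (simp only: if_P[OF True])
    hence "1/2 * (Y $$ (a, m) * Y $$ (c, m)) = Y $$ (a, m) * Y $$ (c, m)" by (simp only: mult.commute)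
    thus ?thesis using half_eq[OF two] by blast
  next
    case False
    hence "1/2 * (Y $$ (a, m) * Y $$ (c, m)) = 0" using e by (simp only: if_not_P[OF False] if_False)
    thus ?thesis using two by simp
  qed
qed

lemma centr_row:
  assumes Y: "Y \<in> centralizer n (r_DJ n)" and two: "(2::'a::field) \<noteq> 0"
    and a: "a < n" and m: "m < n" and p: "p < n" and mp: "m \<noteq> p"
  shows "Y $$ (a, m) * Y $$ (a, p) = (0::'a)"
proof -
  have e: "(if p < m then Y $$ (a, p) * Y $$ (a, m) else 0) = 1/2 * (Y $$ (a, m) * Y $$ (a, p))"
    using centr_CE[OF Y a a m p] mp by (simp only: CEsimps)
  show ?thesis
  proof (cases "p < m")
    case True
    have "Y $$ (a, p) * Y $$ (a, m) = 1/2 * (Y $$ (a, m) * Y $$ (a, p))" using e by (simp only: if_P[OF True])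
    hence "1/2 * (Y $$ (a, m) * Y $$ (a, p)) = Y $$ (a, m) * Y $$ (a, p)" by (simp only: mult.commute)
    thus ?thesis using half_eq[OF two] by blast
  next
    case False
    hence "1/2 * (Y $$ (a, m) * Y $$ (a, p)) = 0" using e by (simp only: if_not_P[OF False] if_False)
    thus ?thesis using two by simp
  qed
qed

lemma centr_ord:
  assumes Y: "Y \<in> centralizer n (r_DJ n)"
    and a: "a < n" and c: "c < n" and m: "m < n" and p: "p < n" and ac: "a < c" and mp: "m < p"
  shows "Y $$ (c, m) * Y $$ (a, p) = (0::'a::field)"
proof -
  have "\<not> p < m" "m \<noteq> p" "a \<noteq> c" using ac mp by auto
  thus ?thesis using centr_CE[OF Y a c m p] ac by (simp only: CEsimps)
qed

lemma centr_diag: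
  assumes Y: "Y \<in> centralizer n (r_DJ n)" and two: "(2::'a::field) \<noteq> 0"
  shows "\<forall>a b. a < n \<longrightarrow> b < n \<longrightarrow> a \<noteq> b \<longrightarrow> Y $$ (a, b) = (0::'a)"
proof -
  have Yc: "Y \<in> carrier_mat n n" and Yi: "invertible_mat Y" using Y unfolding centralizer_def by auto
  have Y': "minv Y \<in> carrier_mat n n" "Y * minv Y = 1\<^sub>m n" using minv_props[OF Yc Yi] by auto
  have rownz: "\<exists>k<n. Y $$ (a, k) \<noteq> 0" if a: "a < n" for a
  proof (rule ccontr)
    assume "\<not> (\<exists>k<n. Y $$ (a, k) \<noteq> 0)"
    hence "(\<Sum>k<n. Y $$ (a, k) * minv Y $$ (k, a)) = 0" by simp
    moreover have "(\<Sum>k<n. Y $$ (a, k) * minv Y $$ (k, a)) = 1"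
      using mult_entry[OF Yc Y'(1) a a] Y'(2) a by simp
    ultimately show False by simp
  qed
  define \<pi> where "\<pi> a = (SOME k. k < n \<and> Y $$ (a, k) \<noteq> 0)" for a
  have pi: "\<pi> a < n \<and> Y $$ (a, \<pi> a) \<noteq> 0" if "a < n" for a
    unfolding \<pi>_def using someI_ex[OF rownz[OF that]] by blast
  have inj: "a = c" if "a < n" "c < n" "\<pi> a = \<pi> c" for a c
  proof (rule ccontr)
    assume "a \<noteq> c"
    hence "Y $$ (a, \<pi> a) * Y $$ (c, \<pi> a) = 0" using centr_col[OF Y two that(1,2)] pi that by blast
    thus False using pi[OF that(1)] pi[OF that(2)] that(3) by auto
  qed
  have mono: "\<pi> a < \<pi> c" if "a < c" "c < n" for a c
  proof -
    have an: "a < n" using that by simp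
    have "\<not> \<pi> c < \<pi> a"
    proof
      assume "\<pi> c < \<pi> a"
      hence "Y $$ (c, \<pi> c) * Y $$ (a, \<pi> a) = 0" using centr_ord[OF Y an that(2)] pi an that by blast
      thus False using pi an that by simp
    qed
    moreover have "\<pi> c \<noteq> \<pi> a"
    proof
      assume "\<pi> c = \<pi> a"
      hence "a = c" using inj[OF an that(2)] by simp
      thus False using that by simp
    qed
    ultimately show ?thesis by simp
  qed
  have lower: "a < n \<longrightarrow> a \<le> \<pi> a" for a
  proof (induction a)
    case 0 thus ?case by simp
  next
    case (Suc a)
    show ?case
    proof
      assume h: "Suc a < n"
      have "a \<le> \<pi> a" using Suc.IH h by simp
      moreover have "\<pi> a < \<pi> (Suc a)" using mono[of a "Suc a"] h by simp
      ultimately show "Suc a \<le> \<pi> (Suc a)" by simp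
    qed
  qed
  have upper: "k < n \<longrightarrow> \<pi> (n - 1 - k) \<le> n - 1 - k" for k
  proof (induction k)
    case 0
    show ?case
    proof
      assume "0 < n"
      hence "\<pi> (n - 1) < n" using pi[of "n - 1"] by simp
      thus "\<pi> (n - 1 - 0) \<le> n - 1 - 0" by simp
    qed
  next
    case (Suc k)
    show ?case
    proof
      assume k: "Suc k < n"
      have "Suc (n - 1 - Suc k) = n - 1 - k" using k by simp
      hence "\<pi> (n - 1 - Suc k) < \<pi> (n - 1 - k)" using mono[of "n - 1 - Suc k" "n - 1 - k"] k by simp
      thus "\<pi> (n - 1 - Suc k) \<le> n - 1 - Suc k" using Suc k by simp
    qed
  qed
  have pid: "\<pi> a = a" if "a < n" for a
  proof -
    have "\<pi> (n - 1 - (n - 1 - a)) \<le> n - 1 - (n - 1 - a)" using upper[of "n - 1 - a"] that by simp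
    hence "\<pi> a \<le> a" using that by simp
    thus ?thesis using lower[of a] that by simp
  qed
  show ?thesis
  proof (intro allI impI)
    fix a b assume ab: "a < n" "b < n" "a \<noteq> b"
    have "Y $$ (a, b) * Y $$ (a, a) = 0" using centr_row[OF Y two ab(1,2) ab(1)] ab by simp
    moreover have "Y $$ (a, a) \<noteq> 0" using pi[OF ab(1)] pid[OF ab(1)] by simp
    ultimately show "Y $$ (a, b) = 0" by simp
  qed
qed




lemma inv_det: fixes A :: "'a::field mat" assumes A: "A \<in> carrier_mat n n" and inv: "invertible_mat A" shows "det A \<noteq> 0"
proof -
  have M: "minv A \<in> carrier_mat n n" "A * minv A = 1\<^sub>m n" "minv A * A = 1\<^sub>m n" using minv_props[OF A inv] by auto
  have "A \<in> Units (ring_mat TYPE('a) n ())"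
    unfolding Units_def using A M by (auto simp: ring_mat_simps)
  thus ?thesis by (rule unit_imp_det_non_zero)
qed

lemma det_inv: assumes A: "A \<in> carrier_mat n n" and d: "det A \<noteq> (0::'a::field)" shows "invertible_mat A"
proof -
  have "A \<in> Units (ring_mat TYPE('a) n ())" by (rule det_non_zero_imp_unit[OF A d])
  then obtain B where B: "B \<in> carrier_mat n n" "B * A = 1\<^sub>m n" "A * B = 1\<^sub>m n"
    unfolding Units_def by (auto simp: ring_mat_simps)
  thus ?thesis using A unfolding invertible_mat_def inverts_mat_def square_mat.simps by auto
qed

lemma diag_inverse:
  fixes M :: "'a::field mat"
  assumes M: "M \<in> carrier_mat n n" and Dd: "D = mat n n (\<lambda>(i, j). if i = j then x j else 0)"
    and x: "\<And>j. j < n \<Longrightarrow> x j \<noteq> 0" and MD: "M * D = 1\<^sub>m n"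
    and i: "i < n" and j: "j < n"
  shows "M $$ (i, j) = (if i = j then inverse (x j) else 0)"
proof -
  have Dc: "D \<in> carrier_mat n n" using Dd by simp
  have "(M * D) $$ (i, j) = (\<Sum>k<n. M $$ (i, k) * D $$ (k, j))" by (rule mult_entry[OF M Dc i j])
  also have "\<dots> = M $$ (i, j) * x j"
    using j Dd by (subst one_term[of j]) auto
  finally have "M $$ (i, j) * x j = (if i = j then 1 else 0)" using MD i j by simp
  thus ?thesis using x[OF j] by (auto simp: field_simps)
qed

lemma four_term:
  assumes a: "a < (n::nat)" and b: "b < n" and c: "c < n" and d: "d < n"
    and z: "\<And>i j k l. i < n \<Longrightarrow> j < n \<Longrightarrow> k < n \<Longrightarrow> l < n \<Longrightarrow> (i, j, k, l) \<noteq> (a, b, c, d) \<Longrightarrow> G i j k l = (0::'a::comm_monoid_add)"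
  shows "(\<Sum>i<n. \<Sum>j<n. \<Sum>k<n. \<Sum>l<n. G i j k l) = G a b c d"
proof -
  have "(\<Sum>i<n. \<Sum>j<n. \<Sum>k<n. \<Sum>l<n. G i j k l) = (\<Sum>j<n. \<Sum>k<n. \<Sum>l<n. G a j k l)"
    by (rule one_term[OF a]) (auto intro!: sum.neutral z)
  also have "\<dots> = (\<Sum>k<n. \<Sum>l<n. G a b k l)"
    by (rule one_term[OF b]) (auto intro!: sum.neutral z a)
  also have "\<dots> = (\<Sum>l<n. G a b c l)"
    by (rule one_term[OF c]) (auto intro!: sum.neutral z a b)
  also have "\<dots> = G a b c d"
    by (rule one_term[OF d]) (auto intro!: z a b c)
  finally show ?thesis .
qed

lemma diag_centr:
  fixes x :: "nat \<Rightarrow> 'a::field"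
  assumes Dd: "D = mat n n (\<lambda>(i, j). if i = j then x j else 0)"
    and x: "\<And>j. j < n \<Longrightarrow> x j \<noteq> 0"
  shows "D \<in> centralizer n (r_DJ n)"
proof -
  have Dc: "D \<in> carrier_mat n n" using Dd by simp
  have "det D = prod_list (diag_mat D)"
    by (rule det_upper_triangular[OF _ Dc]) (auto simp: Dd upper_triangular_def)
  also have "\<dots> = (\<Prod>i\<in>{0..<n}. D $$ (i, i))" unfolding prod_list_diag_prod using Dc by simp
  also have "\<dots> \<noteq> 0" using x Dd by (auto simp: prod_zero_iff)
  finally have Di: "invertible_mat D" using det_inv[OF Dc] by blast
  define M where "M = minv D"
  have Mp: "M \<in> carrier_mat n n" "M * D = 1\<^sub>m n" using minv_props[OF Dc Di] unfolding M_def by auto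
  have Me: "M $$ (i, j) = (if i = j then inverse (x j) else 0)" if "i < n" "j < n" for i j
    using diag_inverse[OF Mp(1) Dd x Mp(2) that] .
  have De: "D $$ (i, j) = (if i = j then x j else 0)" if "i < n" "j < n" for i j
    using that Dd by simp
  have "Ad_tensor n D (r_DJ n) a b c d = r_DJ n a b c d" if a: "a < n" and b: "b < n" and c: "c < n" and d: "d < n" for a b c d
  proof -
    have "Ad_tensor n D (r_DJ n) a b c d = (\<Sum>i<n. \<Sum>j<n. \<Sum>k<n. \<Sum>l<n.
        D $$ (a, i) * M $$ (j, b) * D $$ (c, k) * M $$ (l, d) * r_DJ n i j k l)"
      unfolding Ad_tensor_def M_def ..
    also have "\<dots> = D $$ (a, a) * M $$ (b, b) * D $$ (c, c) * M $$ (d, d) * r_DJ n a b c d"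
    proof (rule four_term[OF a b c d])
      fix i j k l assume "i < n" "j < n" "k < n" "l < n" "(i, j, k, l) \<noteq> (a, b, c, d)"
      thus "D $$ (a, i) * M $$ (j, b) * D $$ (c, k) * M $$ (l, d) * r_DJ n i j k l = 0"
        using De Me a b c d by auto
    qed
    also have "\<dots> = x a * inverse (x b) * x c * inverse (x d) * r_DJ n a b c d"
      using a b c d De Me by simp
    also have "\<dots> = r_DJ n a b c d"
    proof (cases "a < b \<and> c = b \<and> d = a")
      case True thus ?thesis using x a b by (simp add: field_simps)
    next
      case F1: False
      show ?thesis
      proof (cases "a = b \<and> c = d")
        case True thus ?thesis using x a c by (simp add: field_simps)
      next
        case False
        hence "r_DJ n a b c d = (0::'a)" using F1 unfolding r_DJ_def by auto
        thus ?thesis by simp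
      qed
    qed
    finally show ?thesis .
  qed
  thus ?thesis unfolding centralizer_def using Dc Di by blast
qed

context acl begin

lemma two_nz: "(2::'a) \<noteq> 0"
proof -
  have "(of_nat 2 :: 'a) = emb (of_nat 2)" using fh_of_nat[OF emb_hom, of 2] by simp
  moreover have "emb (of_nat 2) \<noteq> 0" using fh_zero_iff[OF emb_hom, of "of_nat 2"] by simp
  ultimately show ?thesis by simp
qed

lemma main:
  assumes coc: "is_cocycle emb n (r_DJ n) X"
  shows "\<exists>Q C. Q \<in> GL_K emb n \<and> C \<in> centralizer n (r_DJ n) \<and> X = Q * C"
proof -
  have Xc: "X \<in> carrier_mat n n" and Xi: "invertible_mat X"
    and cy: "\<And>\<sigma>. \<sigma> \<in> galois_group emb \<Longrightarrow> minv X * map_mat \<sigma> X \<in> centralizer n (r_DJ n)"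
    using coc unfolding is_cocycle_def by auto
  define X' where "X' = minv X"
  have X': "X' \<in> carrier_mat n n" "X * X' = 1\<^sub>m n" "X' * X = 1\<^sub>m n" using minv_props[OF Xc Xi] unfolding X'_def by auto
  have key: "\<exists>dd. \<forall>i<n. \<sigma> (X $$ (i, j)) = X $$ (i, j) * dd" if s: "\<sigma> \<in> galois_group emb" and j: "j < n" for \<sigma> j
  proof -
    define Y where "Y = X' * map_mat \<sigma> X"
    have Yc: "Y \<in> centralizer n (r_DJ n)" using cy[OF s] unfolding Y_def X'_def .
    have Yd: "\<forall>a b. a < n \<longrightarrow> b < n \<longrightarrow> a \<noteq> b \<longrightarrow> Y $$ (a, b) = 0" using centr_diag[OF Yc two_nz] .
    have sX: "map_mat \<sigma> X \<in> carrier_mat n n" using Xc by simp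
    have Ycar: "Y \<in> carrier_mat n n" unfolding Y_def using X'(1) sX by simp
    have "X * Y = (X * X') * map_mat \<sigma> X" unfolding Y_def using Xc X'(1) sX by (simp add: assoc_mult_mat)
    also have "\<dots> = map_mat \<sigma> X" using X'(2) sX by simp
    finally have XY: "X * Y = map_mat \<sigma> X" .
    show ?thesis
    proof (intro exI allI impI)
      fix i assume i: "i < n"
      have "\<sigma> (X $$ (i, j)) = (X * Y) $$ (i, j)" using XY i j Xc by simp
      also have "\<dots> = (\<Sum>k<n. X $$ (i, k) * Y $$ (k, j))" by (rule mult_entry[OF Xc Ycar i j])
      also have "\<dots> = X $$ (i, j) * Y $$ (j, j)" using j Yd by (subst one_term[of j]) auto
      finally show "\<sigma> (X $$ (i, j)) = X $$ (i, j) * Y $$ (j, j)" .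
    qed
  qed
  have colnz: "\<exists>i<n. X $$ (i, j) \<noteq> 0" if j: "j < n" for j
  proof (rule ccontr)
    assume "\<not> (\<exists>i<n. X $$ (i, j) \<noteq> 0)"
    hence "(\<Sum>k<n. X' $$ (j, k) * X $$ (k, j)) = 0" by simp
    moreover have "(\<Sum>k<n. X' $$ (j, k) * X $$ (k, j)) = 1"
      using mult_entry[OF X'(1) Xc j j] X'(3) j by simp
    ultimately show False by simp
  qed
  define \<rho> where "\<rho> j = (SOME i. i < n \<and> X $$ (i, j) \<noteq> 0)" for j
  have rho: "\<rho> j < n \<and> X $$ (\<rho> j, j) \<noteq> 0" if "j < n" for j
    unfolding \<rho>_def using someI_ex[OF colnz[OF that]] by blast
  define x where "x j = X $$ (\<rho> j, j)" for j
  have xnz: "x j \<noteq> 0" if "j < n" for j using rho[OF that] unfolding x_def by simp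
  define Q where "Q = mat n n (\<lambda>(i, j). X $$ (i, j) / x j)"
  define Cm where "Cm = mat n n (\<lambda>(i, j). if i = j then x j else 0)"
  have Qc: "Q \<in> carrier_mat n n" and Cc: "Cm \<in> carrier_mat n n" unfolding Q_def Cm_def by auto
  have XQC: "X = Q * Cm"
  proof (rule eq_matI)
    fix i j assume i: "i < dim_row (Q * Cm)" and j: "j < dim_col (Q * Cm)"
    hence i': "i < n" and j': "j < n" using Qc Cc by auto
    have "(Q * Cm) $$ (i, j) = (\<Sum>k<n. Q $$ (i, k) * Cm $$ (k, j))" by (rule mult_entry[OF Qc Cc i' j'])
    also have "\<dots> = Q $$ (i, j) * x j" using j' i' by (subst one_term[of j]) (auto simp: Cm_def)
    also have "\<dots> = X $$ (i, j)" using i' j' xnz[OF j'] by (simp add: Q_def)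
    finally show "X $$ (i, j) = (Q * Cm) $$ (i, j)" by simp
  qed (use Xc Qc Cc in auto)
  have dX: "det X \<noteq> 0" by (rule inv_det[OF Xc Xi])
  have "det X = det Q * det Cm" using XQC det_mult[OF Qc Cc] by simp
  hence dQ: "det Q \<noteq> 0" using dX by auto
  have Qi: "invertible_mat Q" by (rule det_inv[OF Qc dQ])
  have Cent: "Cm \<in> centralizer n (r_DJ n)" by (rule diag_centr[OF Cm_def xnz])
  have Qent: "Q $$ (i, j) \<in> range emb" if i: "i < n" and j: "j < n" for i j
  proof (rule ccontr)
    assume "Q $$ (i, j) \<notin> range emb"
    then obtain \<sigma> where s: "\<sigma> \<in> galois_group emb" and ne: "\<sigma> (Q $$ (i, j)) \<noteq> Q $$ (i, j)"
      using fixed_field by blast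
    have fh: "is_field_hom \<sigma>" using s unfolding galois_group_def by blast
    obtain dd where dd: "\<forall>i<n. \<sigma> (X $$ (i, j)) = X $$ (i, j) * dd" using key[OF s j] by blast
    have "\<sigma> (x j) = x j * dd" using dd rho[OF j] unfolding x_def by blast
    moreover have "\<sigma> (x j) \<noteq> 0" using xnz[OF j] fh_zero_iff[OF fh] by blast
    ultimately have ddnz: "dd \<noteq> 0" by auto
    have "\<sigma> (Q $$ (i, j)) = \<sigma> (X $$ (i, j)) / \<sigma> (x j)" using i j by (simp add: Q_def fh_divide[OF fh])
    also have "\<dots> = (X $$ (i, j) * dd) / (x j * dd)" using dd i \<open>\<sigma> (x j) = x j * dd\<close> by simp
    also have "\<dots> = Q $$ (i, j)" using i j ddnz xnz[OF j] by (simp add: Q_def)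
    finally show False using ne by simp
  qed
  have "Q \<in> GL_K emb n" unfolding GL_K_def using Qc Qi Qent by blast
  thus ?thesis using Cent XQC by blast
qed

end

theorem mainTheorem6:
  fixes emb :: "complex fls \<Rightarrow> 'a::field" and n :: nat and X :: "'a mat"
  assumes "is_alg_closure_of_K emb"
    and "is_cocycle emb n (r_DJ n) X"
  shows "\<exists>Q C. Q \<in> GL_K emb n \<and> C \<in> centralizer n (r_DJ n) \<and> X = Q * C"
proof -
  interpret acl emb by (unfold_locales) (rule assms(1))
  show ?thesis by (rule main[OF assms(2)])
qed



end
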